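(* For every positive integer $n$, \[|\mathrm{Sort}_n(\mathrm{SC}_{\underline{12}3})|=C_{n-1}+\sum_{i=0}^{n-2}2^{n-2-i}C_i,\] where $C_i=\frac{1}{i+1}\binom{2i}{i}$ is the $i$-th Catalan number.
   Context: $\mathfrak S_n$ is the set of permutations of $\{1,\dots,n\}$. A vincular pattern is a permutation with some entries underlined; a sequence contains it if it has a subsequence with the same relative order in which entries corresponding to adjacent underlined entries occupy consecutive positions. An occurrence of $\underline{12}3$ is $a_j a_{j+1} a_l$ with $l>j+1$ and $a_j<a_{j+1}<a_l$. For a pattern $\sigma$, the map $\mathrm{SC}_\sigma$ acts on $\tau$: read entries left to right; when the next entry $x$ is read, if pushing $x$ yields a stack whose entries read top to bottom (stack adjacency = consecutive positions) avoid $\sigma$, push $x$; otherwise pop the top stack entry to the output and repeat. At the end pop all remaining entries; the output is $\mathrm{SC}_\sigma(\tau)$. West's stack-sorting map is $s=\mathrm{SC}_{21}$. $\mathrm{Sort}_n(\mathrm{SC}_\sigma)=\{\tau\in\mathfrak S_n : s(\mathrm{SC}_\sigma(\tau))=12\cdots n\}$. *)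

theory Defs
  imports Main
begin

text \<open>A vincular pattern is given by a permutation p (as a list, e.g. [1,2,3]) together
 with a set A of positions i (0-based) such that the entries at positions i and i+1 of p
 are underlined together, i.e. must occupy consecutive positions in an occurrence.\<close>

definition vinc_occurs :: "nat list \<Rightarrow> nat set \<Rightarrow> 'a::linorder list \<Rightarrow> (nat \<Rightarrow> nat) \<Rightarrow> bool" where
  "vinc_occurs p A w idx \<longleftrightarrow>
     (\<forall>i<length p. idx i < length w) \<and>
     (\<forall>i j. i < j \<and> j < length p \<longrightarrow> idx i < idx j) \<and>
     (\<forall>i<length p. \<forall>j<length p. (w ! idx i < w ! idx j \<longleftrightarrow> p ! i < p ! j)) \<and>
     (\<forall>i\<in>A. Suc i < length p \<longrightarrow> idx (Suc i) = Suc (idx i))"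

definition vinc_contains :: "nat list \<Rightarrow> nat set \<Rightarrow> 'a::linorder list \<Rightarrow> bool" where
  "vinc_contains p A w \<longleftrightarrow> (\<exists>idx. vinc_occurs p A w idx)"

definition vinc_avoids :: "nat list \<Rightarrow> nat set \<Rightarrow> 'a::linorder list \<Rightarrow> bool" where
  "vinc_avoids p A w \<longleftrightarrow> \<not> vinc_contains p A w"

text \<open>Generic pattern-avoiding stack machine. Stacks are lists whose head is the top,
 so a stack read top to bottom is the list itself. Arguments: avoidance test,
 remaining input, stack, output so far.\<close>

function sc_aux :: "('a list \<Rightarrow> bool) \<Rightarrow> 'a list \<Rightarrow> 'a list \<Rightarrow> 'a list \<Rightarrow> 'a list" where
  "sc_aux ok [] st out = out @ st"
| "sc_aux ok (x # xs) st out =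
     (if st = [] \<or> ok (x # st) then sc_aux ok xs (x # st) out
      else sc_aux ok (x # xs) (tl st) (out @ [hd st]))"
  by pat_completeness auto
termination
  by (relation "measures [\<lambda>(_, xs, _, _). length xs, \<lambda>(_, _, st, _). length st]") auto

definition SC :: "nat list \<Rightarrow> nat set \<Rightarrow> 'a::linorder list \<Rightarrow> 'a list" where
  "SC p A \<tau> = sc_aux (vinc_avoids p A) \<tau> [] []"

definition west_s :: "'a::linorder list \<Rightarrow> 'a list" where
  "west_s = SC [2,1] {}"

definition perms :: "nat \<Rightarrow> nat list set" where
  "perms n = {\<tau>. distinct \<tau> \<and> set \<tau> = {1..n}}"

definition Sort_n :: "nat list \<Rightarrow> nat set \<Rightarrow> nat \<Rightarrow> nat list set" where
  "Sort_n p A n = {\<tau> \<in> perms n. west_s (SC p A \<tau>) = [1..<n+1]}"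

definition catalan :: "nat \<Rightarrow> nat" where
  "catalan i = ((2 * i) choose i) div (i + 1)"

end

theory Submission
  imports Defs "HOL-Library.Multiset" "HOL-Computational_Algebra.Formal_Power_Series"
begin


fun av123 :: "'a::linorder list \<Rightarrow> bool" where
  "av123 (x # y # r) = ((x < y \<longrightarrow> (\<forall>z\<in>set r. z \<le> y)) \<and> av123 (y # r))"
| "av123 _ = True"

definition c123 :: "'a::linorder list \<Rightarrow> bool" where
  "c123 w \<longleftrightarrow> (\<exists>j l. Suc j < l \<and> l < length w \<and> w!j < w!Suc j \<and> w!Suc j < w!l)"

lemma less3: "(\<forall>i<(3::nat). P i) \<longleftrightarrow> P 0 \<and> P 1 \<and> P 2"
  by (auto simp: numeral_3_eq_3 numeral_2_eq_2 less_Suc_eq)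

lemma vinc_c123: "vinc_contains [1,2,3] {0} w \<longleftrightarrow> c123 w"
proof
  assume "vinc_contains [1,2,3] {0} w"
  then obtain idx where h: "vinc_occurs [1,2,3] {0} w idx" unfolding vinc_contains_def by blast
  have a: "idx 1 = Suc (idx 0)" using h unfolding vinc_occurs_def by auto
  have "\<forall>i j. i < j \<and> j < length [1,2,3::nat] \<longrightarrow> idx i < idx j" using h unfolding vinc_occurs_def by blast
  then have b1: "idx 1 < idx 2" by (drule_tac spec[of _ 1], drule_tac spec[of _ 2]) simp
  have b: "idx 1 < idx 2" "idx 2 < length w" using h b1 unfolding vinc_occurs_def by auto
  have cmp: "\<And>i j. i<3 \<Longrightarrow> j<3 \<Longrightarrow> (w!idx i < w!idx j) = ([1,2,3::nat]!i < [1,2,3]!j)"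
    using h unfolding vinc_occurs_def by auto
  have c: "w ! idx 0 < w ! idx 1" "w ! idx 1 < w ! idx 2"
    using cmp[of 0 1] cmp[of 1 2] by simp_all
  show "c123 w" unfolding c123_def using a b c by (intro exI[of _ "idx 0"] exI[of _ "idx 2"]) auto
next
  assume "c123 w"
  then obtain j l where h: "Suc j < l" "l < length w" "w!j < w!Suc j" "w!Suc j < w!l"
    unfolding c123_def by blast
  define idx where "idx = (\<lambda>i::nat. if i = 0 then j else if i = 1 then Suc j else l)"
  have "vinc_occurs [1,2,3] {0} w idx"
    unfolding vinc_occurs_def using h by (auto simp: less3 idx_def)
  then show "vinc_contains [1,2,3] {0} w" unfolding vinc_contains_def by blast
qed

lemma c123_Cons2: "c123 (x # y # r) \<longleftrightarrow> (x < y \<and> (\<exists>z\<in>set r. y < z)) \<or> c123 (y # r)"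
proof
  assume "c123 (x # y # r)"
  then obtain j l where h: "Suc j < l" "l < length (x#y#r)" "(x#y#r)!j < (x#y#r)!Suc j"
     "(x#y#r)!Suc j < (x#y#r)!l" unfolding c123_def by blast
  show "(x < y \<and> (\<exists>z\<in>set r. y < z)) \<or> c123 (y # r)"
  proof (cases j)
    case 0
    then obtain l' where "l = Suc (Suc l')" using h by (cases l; cases "l - 1") auto
    then show ?thesis using h 0 by (auto intro: nth_mem)
  next
    case (Suc j')
    then obtain l' where "l = Suc l'" using h by (cases l) auto
    then have "c123 (y # r)" unfolding c123_def using h Suc
      by (intro exI[of _ j'] exI[of _ l']) auto
    then show ?thesis by blast
  qed
next
  assume "(x < y \<and> (\<exists>z\<in>set r. y < z)) \<or> c123 (y # r)"
  then show "c123 (x # y # r)"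
  proof
    assume "x < y \<and> (\<exists>z\<in>set r. y < z)"
    then obtain k where "x < y" "k < length r" "y < r ! k" by (auto simp: in_set_conv_nth)
    then show ?thesis unfolding c123_def by (intro exI[of _ 0] exI[of _ "Suc (Suc k)"]) auto
  next
    assume "c123 (y # r)"
    then obtain j l where h: "Suc j < l" "l < length (y#r)" "(y#r)!j < (y#r)!Suc j"
     "(y#r)!Suc j < (y#r)!l" unfolding c123_def by blast
    then show ?thesis unfolding c123_def by (intro exI[of _ "Suc j"] exI[of _ "Suc l"]) auto
  qed
qed

lemma c123_short: "length w < 2 \<Longrightarrow> \<not> c123 w"
  unfolding c123_def by auto

lemma av123_c123: "av123 w \<longleftrightarrow> \<not> c123 w"
proof (induction w rule: av123.induct)
  case (1 x y r)
  then show ?case by (auto simp: c123_Cons2 not_less)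
next
  case ("2_1") then show ?case by (simp add: c123_short)
next
  case ("2_2" v) then show ?case by (simp add: c123_short)
qed

lemma ok123_eq: "vinc_avoids [1,2,3] {0} = (av123 :: 'a::linorder list \<Rightarrow> bool)"
  by (rule ext) (unfold vinc_avoids_def vinc_c123 av123_c123, rule refl)

lemma ok21_eq: "vinc_avoids [2,1] {} = (sorted :: 'a::linorder list \<Rightarrow> bool)"
proof (rule ext)
  fix w :: "'a list"
  have eq: "vinc_contains [2,1] {} w \<longleftrightarrow> (\<exists>i j. i < j \<and> j < length w \<and> w!j < w!i)"
  proof
    assume "vinc_contains [2,1] {} w"
    then obtain idx where h: "vinc_occurs [2,1] {} w idx" unfolding vinc_contains_def by blast
    then have "idx 0 < idx 1" "idx 1 < length w" "w!idx 1 < w!idx 0"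
      unfolding vinc_occurs_def by auto
    then show "\<exists>i j. i < j \<and> j < length w \<and> w!j < w!i" by blast
  next
    assume "\<exists>i j. i < j \<and> j < length w \<and> w!j < w!i"
    then obtain i j where h: "i < j" "j < length w" "w!j < w!i" by blast
    define idx where "idx = (\<lambda>k::nat. if k = 0 then i else j)"
    have "vinc_occurs [2,1] {} w idx"
      unfolding vinc_occurs_def using h by (auto simp: idx_def less_Suc_eq numeral_2_eq_2)
    then show "vinc_contains [2,1] {} w" unfolding vinc_contains_def by blast
  qed
  show "vinc_avoids [2,1] {} w = sorted w"
    unfolding vinc_avoids_def eq sorted_iff_nth_mono_less by (auto simp: not_less; meson not_le)
qed


function run :: "('a list \<Rightarrow> bool) \<Rightarrow> 'a list \<Rightarrow> 'a list \<Rightarrow> 'a list \<Rightarrow> 'a list \<times> 'a list" where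
  "run ok [] st out = (st, out)"
| "run ok (x # xs) st out =
     (if st = [] \<or> ok (x # st) then run ok xs (x # st) out
      else run ok (x # xs) (tl st) (out @ [hd st]))"
  by pat_completeness auto
termination
  by (relation "measures [\<lambda>(_, xs, _, _). length xs, \<lambda>(_, _, st, _). length st]") auto

declare run.simps(2)[simp del] sc_aux.simps(2)[simp del]

lemma run_push: "st = [] \<or> ok (x # st) \<Longrightarrow> run ok (x # xs) st out = run ok xs (x # st) out"
  by (simp add: run.simps(2))
lemma run_pop: "\<not> (st = [] \<or> ok (x # st)) \<Longrightarrow> run ok (x # xs) st out = run ok (x # xs) (tl st) (out @ [hd st])"
  by (simp add: run.simps(2))
lemma sc_push: "st = [] \<or> ok (x # st) \<Longrightarrow> sc_aux ok (x # xs) st out = sc_aux ok xs (x # st) out"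
  by (simp add: sc_aux.simps(2))
lemma sc_pop: "\<not> (st = [] \<or> ok (x # st)) \<Longrightarrow> sc_aux ok (x # xs) st out = sc_aux ok (x # xs) (tl st) (out @ [hd st])"
  by (simp add: sc_aux.simps(2))

lemma sc_aux_run: "sc_aux ok xs st out = (let r = run ok xs st out in snd r @ fst r)"
proof (induction ok xs st out rule: run.induct)
  case (2 ok x xs st out)
  then show ?case by (cases "st = [] \<or> ok (x # st)") (simp_all add: run_push run_pop sc_push sc_pop)
qed simp

lemma run_append: "run ok (xs @ ys) st out = (let r = run ok xs st out in run ok ys (fst r) (snd r))"
proof (induction ok xs st out rule: run.induct)
  case (2 ok x xs st out)
  then show ?case by (cases "st = [] \<or> ok (x # st)") (simp_all add: run_push run_pop)
qed simp

lemma run_out_gen: "run ok xs st (a @ out) = (fst (run ok xs st out), a @ snd (run ok xs st out))"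
proof (induction ok xs st out arbitrary: a rule: run.induct)
  case (2 ok x xs st out)
  show ?case
  proof (cases "st = [] \<or> ok (x # st)")
    case True then show ?thesis using 2(1) by (simp add: run_push)
  next
    case False
    then show ?thesis using 2(2)[OF False] by (simp add: run_pop)
  qed
qed simp

lemma run_out: "run ok xs st out = (fst (run ok xs st []), out @ snd (run ok xs st []))"
  using run_out_gen[of ok xs st out "[]"] by simp

lemma run_mset: "mset (fst (run ok xs st out)) + mset (snd (run ok xs st out)) = mset xs + mset st + mset out"
proof (induction ok xs st out rule: run.induct)
  case (2 ok x xs st out)
  show ?case
  proof (cases "st = [] \<or> ok (x # st)")
    case True
    have "run ok (x # xs) st out = run ok xs (x # st) out" using True by (rule run_push)
    then show ?thesis using 2(1)[OF True] by simp
  next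
    case False
    then obtain a st' where st: "st = a # st'" by (cases st) auto
    have "run ok (x # xs) st out = run ok (x # xs) st' (out @ [a])" using False st by (simp add: run_pop)
    then show ?thesis using 2(2)[OF False] st by simp
  qed
qed simp

lemma sc_aux_mset: "mset (sc_aux ok xs st out) = mset xs + mset st + mset out"
proof -
  have "mset (sc_aux ok xs st out) = mset (fst (run ok xs st out)) + mset (snd (run ok xs st out))"
    by (simp add: sc_aux_run Let_def)
  then show ?thesis by (simp only: run_mset)
qed

lemma run_out_len: "length out \<le> length (snd (run ok xs st out))"
proof (induction ok xs st out rule: run.induct)
  case (2 ok x xs st out)
  then show ?case by (cases "st = [] \<or> ok (x # st)") (simp_all add: run_push run_pop)
qed simp

lemma run_nopop: "snd (run ok xs st out) = out \<Longrightarrow> fst (run ok xs st out) = rev xs @ st"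
proof (induction ok xs st out rule: run.induct)
  case (2 ok x xs st out)
  show ?case
  proof (cases "st = [] \<or> ok (x # st)")
    case True then show ?thesis using 2 by (simp add: run_push)
  next
    case False
    then have "snd (run ok (x # xs) st out) = snd (run ok (x # xs) (tl st) (out @ [hd st]))"
      by (simp add: run_pop)
    then have "length out + 1 \<le> length (snd (run ok (x # xs) st out))"
      using run_out_len[of "out @ [hd st]" ok "x # xs" "tl st"] by simp
    then show ?thesis using 2(3) by simp
  qed
qed simp


fun ok12 :: "'a::linorder list \<Rightarrow> bool" where
  "ok12 (x # y # _) = (\<not> x < y)"
| "ok12 _ = True"

definition sc12 :: "'a::linorder list \<Rightarrow> 'a list" where
  "sc12 R = sc_aux ok12 R [] []"

lemma run_set: "set (fst (run ok xs st out)) \<union> set (snd (run ok xs st out)) = set xs \<union> set st \<union> set out"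
proof -
  have "set_mset (mset (fst (run ok xs st out)) + mset (snd (run ok xs st out))) = set_mset (mset xs + mset st + mset out)"
    by (simp only: run_mset)
  then show ?thesis by (simp only: set_mset_union set_mset_mset)
qed

lemma run_fst_set: "set (fst (run ok xs st out)) \<subseteq> set xs \<union> set st \<union> set out"
  using run_set[of ok xs st out] by (metis Un_upper1)

lemma av123_tl: "av123 st \<Longrightarrow> av123 (tl st)"
  by (cases st rule: av123.cases) auto

lemma run_av123_inv:
  fixes xs st out :: "'a::linorder list"
  shows "av123 st \<Longrightarrow> av123 (fst (run av123 xs st out))"
proof (induction "av123 :: 'a list \<Rightarrow> bool" xs st out rule: run.induct)
  case (2 x xs st out)
  show ?case
  proof (cases "st = [] \<or> av123 (x # st)")
    case True
    then have "av123 (x # st)" by auto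
    then show ?thesis using 2(1)[OF True] True by (simp add: run_push)
  next
    case False
    then show ?thesis using 2(2)[OF False] 2(3) by (simp add: run_pop av123_tl)
  qed
qed simp

lemma above_n:
  fixes n :: "'a::linorder"
  assumes "av123 (S @ n # B)" "\<forall>x\<in>set xs. x < n" "\<forall>x\<in>set S. x < n" "\<forall>z\<in>set B. z \<le> n"
  shows "run av123 xs (S @ n # B) out = (fst (run ok12 xs S out) @ n # B, snd (run ok12 xs S out))"
  using assms
proof (induction "ok12 :: 'a list \<Rightarrow> bool" xs S out rule: run.induct)
  case (1 st out)
  then show ?case by simp
next
  case (2 x xs S out)
  show ?case
  proof (cases "S = [] \<or> ok12 (x # S)")
    case True
    have "av123 (x # S @ n # B)"
    proof (cases S)
      case Nil then show ?thesis using 2 by simp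
    next
      case (Cons s S') then show ?thesis using 2 True by simp
    qed
    then have "run av123 (x # xs) (S @ n # B) out = run av123 xs ((x # S) @ n # B) out"
      by (simp add: run_push)
    moreover have "run ok12 (x # xs) S out = run ok12 xs (x # S) out" using True by (rule run_push)
    ultimately show ?thesis using 2(1)[OF True] 2(3-6) \<open>av123 (x # S @ n # B)\<close> by simp
  next
    case False
    then obtain s S' where S: "S = s # S'" and xs: "x < s" by (cases S rule: ok12.cases) auto
    have "s < n" using 2(5) S by simp
    then have "\<not> av123 (x # S @ n # B)" using S xs by auto
    then have "run av123 (x # xs) (S @ n # B) out = run av123 (x # xs) (S' @ n # B) (out @ [s])"
      using S by (simp add: run_pop)
    moreover have "run ok12 (x # xs) S out = run ok12 (x # xs) S' (out @ [s])"
      using False S by (simp add: run_pop)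
    moreover have "av123 (S' @ n # B)" using av123_tl[OF 2(3)] S by simp
    ultimately show ?thesis using 2(2)[OF False] 2(4-6) S by simp
  qed
qed

lemma ok12_bottom:
  fixes a :: "'a::linorder"
  assumes "\<forall>x\<in>set xs. a < x" "\<forall>x\<in>set S. a < x"
  shows "run ok12 xs (S @ [a]) out = (fst (run ok12 xs S out) @ [a], snd (run ok12 xs S out))"
  using assms
proof (induction "ok12 :: 'a list \<Rightarrow> bool" xs S out rule: run.induct)
  case (1 st out)
  then show ?case by simp
next
  case (2 x xs S out)
  show ?case
  proof (cases "S = [] \<or> ok12 (x # S)")
    case True
    have "ok12 (x # S @ [a])" using True 2(3) by (cases S) auto
    then have "run ok12 (x # xs) (S @ [a]) out = run ok12 xs ((x # S) @ [a]) out"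
      by (simp add: run_push)
    moreover have "run ok12 (x # xs) S out = run ok12 xs (x # S) out" using True by (rule run_push)
    ultimately show ?thesis using 2(1)[OF True] 2(3-4) by simp
  next
    case False
    then obtain s S' where S: "S = s # S'" and xs: "x < s" by (cases S rule: ok12.cases) auto
    then have "run ok12 (x # xs) (S @ [a]) out = run ok12 (x # xs) (S' @ [a]) (out @ [s])"
      by (simp add: run_pop)
    moreover have "run ok12 (x # xs) S out = run ok12 (x # xs) S' (out @ [s])"
      using False S by (simp add: run_pop)
    ultimately show ?thesis using 2(2)[OF False] 2(3-4) S by simp
  qed
qed

lemma ok12_min_in:
  fixes a :: "'a::linorder"
  assumes "\<forall>s\<in>set S. a < s"
  shows "run ok12 (a # B) S out = run ok12 B [a] (out @ S)"
  using assms
proof (induction S arbitrary: out)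
  case Nil then show ?case by (simp add: run_push)
next
  case (Cons s S)
  have "run ok12 (a # B) (s # S) out = run ok12 (a # B) S (out @ [s])"
    using Cons(2) by (simp add: run_pop)
  then show ?case using Cons by simp
qed

lemma sc12_decomp:
  fixes a :: "'a::linorder"
  assumes "\<forall>x\<in>set A. a < x" "\<forall>x\<in>set B. a < x"
  shows "sc12 (A @ a # B) = sc12 A @ sc12 B @ [a]"
proof -
  define r where "r = run ok12 A [] []"
  have sr: "set (fst r) \<subseteq> set A" using run_fst_set[of ok12 A "[]" "[]"] r_def by simp
  have "run ok12 (A @ a # B) [] [] = run ok12 (a # B) (fst r) (snd r)"
    by (simp add: run_append r_def Let_def)
  also have "\<dots> = run ok12 B [a] (snd r @ fst r)"
    using sr assms by (intro ok12_min_in) auto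
  also have "\<dots> = (fst (run ok12 B [] (snd r @ fst r)) @ [a], snd (run ok12 B [] (snd r @ fst r)))"
    using ok12_bottom[of B a "[]"] assms by simp
  finally have e: "run ok12 (A @ a # B) [] [] = \<dots>" .
  have "sc12 A = snd r @ fst r" by (simp add: sc12_def sc_aux_run r_def Let_def)
  moreover have "sc12 B = snd (run ok12 B [] []) @ fst (run ok12 B [] [])" by (simp add: sc12_def sc_aux_run Let_def)
  ultimately show ?thesis
    using e run_out[of ok12 B "[]" "snd r @ fst r"] by (simp add: sc12_def sc_aux_run Let_def)
qed

lemma av123_min_stays:
  fixes z :: "'a::linorder"
  assumes "av123 st" "z \<in> set st \<or> z \<in> set xs" "\<forall>x\<in>set xs. z \<le> x"
  shows "z \<in> set (fst (run av123 xs st out))"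
  using assms
proof (induction "av123 :: 'a list \<Rightarrow> bool" xs st out rule: run.induct)
  case (1 st out) then show ?case by simp
next
  case (2 x xs st out)
  show ?case
  proof (cases "st = [] \<or> av123 (x # st)")
    case True
    have "av123 (x # st)" using True by auto
    then show ?thesis using 2(1)[OF True] True 2(4-5) by (auto simp: run_push)
  next
    case False
    then obtain s st' where st: "st = s # st'" and xs: "x < s" using 2(3) by (cases st) auto
    have "z \<noteq> s" using xs 2(5) by auto
    then have "z \<in> set st' \<or> z \<in> set (x # xs)" using 2(4) st by auto
    moreover have "run av123 (x # xs) st out = run av123 (x # xs) st' (out @ [s])"
      using False st by (simp add: run_pop)
    ultimately show ?thesis using 2(2)[OF False] 2(3) 2(5) st av123_tl[OF 2(3)] by simp
  qed
qed


lemma ws_def: "west_s w = sc_aux sorted w [] []"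
  unfolding west_s_def SC_def ok21_eq by (rule refl)

lemma sc_aux_set: "set (sc_aux ok xs st out) = set xs \<union> set st \<union> set out"
proof -
  have "set_mset (mset (sc_aux ok xs st out)) = set_mset (mset xs + mset st + mset out)"
    by (simp only: sc_aux_mset)
  then show ?thesis by (simp only: set_mset_union set_mset_mset)
qed

lemma west_mset: "mset (west_s w) = mset w"
  by (simp add: ws_def sc_aux_mset)
lemma west_set: "set (west_s w) = set w"
  by (simp add: ws_def sc_aux_set)
lemma sc12_mset: "mset (sc12 w) = mset w"
  by (simp add: sc12_def sc_aux_mset)
lemma sc12_set: "set (sc12 w) = set w"
  by (simp add: sc12_def sc_aux_set)
lemma sc12_distinct: "distinct w \<Longrightarrow> distinct (sc12 w)"
  using mset_eq_imp_distinct_iff[OF sc12_mset[of w]] by simp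

lemma run_sorted_inv:
  fixes xs st out :: "'a::linorder list"
  shows "sorted st \<Longrightarrow> sorted (fst (run sorted xs st out))"
proof (induction "sorted :: 'a list \<Rightarrow> bool" xs st out rule: run.induct)
  case (2 x xs st out)
  show ?case
  proof (cases "st = [] \<or> sorted (x # st)")
    case True
    then have "sorted (x # st)" by auto
    then show ?thesis using 2(1)[OF True] True by (simp add: run_push)
  next
    case False
    then show ?thesis using 2(2)[OF False] 2(3) by (simp add: run_pop sorted_tl)
  qed
qed simp

lemma sorted_bottom:
  fixes m :: "'a::linorder"
  assumes "sorted S" "\<forall>x\<in>set xs. x < m" "\<forall>x\<in>set S. x < m"
  shows "run sorted xs (S @ [m]) out = (fst (run sorted xs S out) @ [m], snd (run sorted xs S out))"
  using assms
proof (induction "sorted :: 'a list \<Rightarrow> bool" xs S out rule: run.induct)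
  case (1 st out)
  then show ?case by simp
next
  case (2 x xs S out)
  show ?case
  proof (cases "S = [] \<or> sorted (x # S)")
    case True
    have "sorted (x # S @ [m])" using True 2(3-5) by (auto simp: sorted_append)
    then have "run sorted (x # xs) (S @ [m]) out = run sorted xs ((x # S) @ [m]) out"
      by (simp add: run_push)
    moreover have "run sorted (x # xs) S out = run sorted xs (x # S) out" using True by (rule run_push)
    moreover have "sorted (x # S)" using True by auto
    ultimately show ?thesis using 2(1)[OF True] 2(4-5) by simp
  next
    case False
    then obtain s S' where S: "S = s # S'" by (cases S) auto
    have "\<not> sorted (x # S @ [m])" using False S by (auto simp: sorted_append)
    then have "run sorted (x # xs) (S @ [m]) out = run sorted (x # xs) (S' @ [m]) (out @ [s])"
      using S by (simp add: run_pop)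
    moreover have "run sorted (x # xs) S out = run sorted (x # xs) S' (out @ [s])"
      using False S by (simp add: run_pop)
    ultimately show ?thesis using 2(2)[OF False] 2(3-5) S by simp
  qed
qed

lemma sorted_max_in:
  fixes m :: "'a::linorder"
  assumes "\<forall>s\<in>set S. s < m"
  shows "run sorted (m # B) S out = run sorted B [m] (out @ S)"
  using assms
proof (induction S arbitrary: out)
  case Nil then show ?case by (simp add: run_push)
next
  case (Cons s S)
  have "\<not> sorted (m # s # S)" using Cons(2) by auto
  then have "run sorted (m # B) (s # S) out = run sorted (m # B) S (out @ [s])"
    by (simp add: run_pop)
  then show ?case using Cons by simp
qed

lemma west_decomp:
  fixes m :: "'a::linorder"
  assumes "\<forall>x\<in>set X. x < m" "\<forall>x\<in>set Y. x < m"
  shows "west_s (X @ m # Y) = west_s X @ west_s Y @ [m]"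
proof -
  define r where "r = run sorted X [] []"
  have sr: "set (fst r) \<subseteq> set X" using run_fst_set[of sorted X "[]" "[]"] r_def by simp
  have "run sorted (X @ m # Y) [] [] = run sorted (m # Y) (fst r) (snd r)"
    by (simp add: run_append r_def Let_def)
  also have "\<dots> = run sorted Y [m] (snd r @ fst r)"
    using sr assms by (intro sorted_max_in) auto
  also have "\<dots> = (fst (run sorted Y [] (snd r @ fst r)) @ [m], snd (run sorted Y [] (snd r @ fst r)))"
    using sorted_bottom[of "[]" Y m] assms by simp
  finally have e: "run sorted (X @ m # Y) [] [] = \<dots>" .
  have "west_s X = snd r @ fst r" by (simp add: ws_def sc_aux_run r_def Let_def)
  moreover have "west_s Y = snd (run sorted Y [] []) @ fst (run sorted Y [] [])" by (simp add: ws_def sc_aux_run Let_def)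
  ultimately show ?thesis
    using e run_out[of sorted Y "[]" "snd r @ fst r"] by (simp add: ws_def sc_aux_run Let_def)
qed

lemma west_sorted_decomp:
  fixes m :: "'a::linorder"
  assumes "\<forall>x\<in>set X. x < m" "\<forall>x\<in>set Y. x < m"
  shows "sorted (west_s (X @ m # Y)) \<longleftrightarrow> sorted (west_s X) \<and> sorted (west_s Y) \<and> (\<forall>x\<in>set X. \<forall>y\<in>set Y. x \<le> y)"
  using assms by (auto simp: west_decomp sorted_append west_set less_imp_le)

lemma west_nil: "west_s [] = []"
  by (simp add: ws_def)

lemma dec_west: "sorted_wrt (>) (w :: 'a::linorder list) \<Longrightarrow> sorted (west_s w)"
proof (induction w)
  case Nil then show ?case by (simp add: west_nil)
next
  case (Cons m w)
  have "west_s ([] @ m # w) = west_s [] @ west_s w @ [m]"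
    using Cons(2) by (intro west_decomp) auto
  then show ?case using Cons by (auto simp: west_nil sorted_append west_set less_imp_le)
qed

lemma west_dec:
  fixes m :: "'a::linorder"
  assumes "distinct X" "\<forall>x\<in>set X. m < x" "sorted (west_s (X @ [m]))"
  shows "sorted_wrt (>) X"
  using assms
proof (induction "length X" arbitrary: X rule: less_induct)
  case less
  show ?case
  proof (cases "X = []")
    case True then show ?thesis by simp
  next
    case False
    define M where "M = Max (set X)"
    have MX: "M \<in> set X" using False M_def by simp
    then obtain X1 X2 where X: "X = X1 @ M # X2" by (meson split_list)
    have le: "\<forall>x\<in>set X. x \<le> M" using M_def by simp
    have lt1: "\<forall>x\<in>set X1. x < M" using le less(2) X by (auto simp: order_le_less)
    have lt2: "\<forall>x\<in>set X2. x < M" using le less(2) X by (auto simp: order_le_less)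
    have mM: "m < M" using less(3) MX by auto
    have "X @ [m] = X1 @ M # (X2 @ [m])" using X by simp
    then have s: "sorted (west_s X1) \<and> sorted (west_s (X2 @ [m])) \<and> (\<forall>x\<in>set X1. \<forall>y\<in>set (X2 @ [m]). x \<le> y)"
      using west_sorted_decomp[of X1 M "X2 @ [m]"] lt1 lt2 mM less(4) by simp
    have "X1 = []"
    proof (rule ccontr)
      assume "X1 \<noteq> []"
      then obtain x where "x \<in> set X1" by (cases X1) auto
      then have "x \<le> m" "m < x" using s less(3) X by auto
      then show False by simp
    qed
    then have X': "X = M # X2" using X by simp
    have "sorted_wrt (>) X2"
      using less(1)[of X2] less(2-3) s X' by simp
    then show ?thesis using X' lt2 by simp
  qed
qed

lemma D_equiv:
  fixes R :: "'a::linorder list"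
  assumes "distinct R"
  shows "sorted (west_s (sc12 R)) \<longleftrightarrow> sorted_wrt (>) (sc12 R)"
proof
  assume h: "sorted (west_s (sc12 R))"
  show "sorted_wrt (>) (sc12 R)"
  proof (cases "R = []")
    case True then show ?thesis by (simp add: sc12_def)
  next
    case False
    define a where "a = Min (set R)"
    have aR: "a \<in> set R" using False a_def by simp
    then obtain A B where R: "R = A @ a # B" by (meson split_list)
    have ge: "\<forall>x\<in>set R. a \<le> x" using a_def by simp
    have lA: "\<forall>x\<in>set A. a < x" using ge assms R by (auto simp: order_le_less)
    have lB: "\<forall>x\<in>set B. a < x" using ge assms R by (auto simp: order_le_less)
    have e: "sc12 R = (sc12 A @ sc12 B) @ [a]" using sc12_decomp[OF lA lB] R by simp
    have d: "distinct (sc12 R)" using sc12_distinct[OF assms] .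
    have g: "\<forall>x\<in>set (sc12 A @ sc12 B). a < x" using lA lB by (auto simp: sc12_set)
    have d2: "distinct (sc12 A @ sc12 B)" using d e by simp
    have "sorted_wrt (>) (sc12 A @ sc12 B)"
      using west_dec[OF d2 g] h e by simp
    then show ?thesis using e lA lB by (simp add: sorted_wrt_append sc12_set)
  qed
next
  assume "sorted_wrt (>) (sc12 R)"
  then show "sorted (west_s (sc12 R))" by (rule dec_west)
qed


lemma SC_eq: "SC [1,2,3] {0} \<tau> = sc_aux av123 \<tau> [] []"
  unfolding SC_def ok123_eq by (rule refl)

lemma SC_decomp:
  fixes n :: "'a::linorder"
  assumes "\<forall>x\<in>set L. x < n" "\<forall>x\<in>set R. x < n"
  shows "SC [1,2,3] {0} (L @ n # R) =
     snd (run av123 L [] []) @ sc12 R @ n # fst (run av123 L [] [])"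
proof -
  define r where "r = run av123 L [] []"
  have sr: "set (fst r) \<subseteq> set L" using run_fst_set[of av123 L "[]" "[]"] r_def by simp
  have avr: "av123 (fst r)" using run_av123_inv[of "[]" L "[]"] r_def by simp
  have avn: "av123 (n # fst r)"
  proof (cases "fst r")
    case Nil then show ?thesis by simp
  next
    case (Cons b B)
    then have "b < n" using sr assms by auto
    then show ?thesis using avr Cons by auto
  qed
  have "run av123 (L @ n # R) [] [] = run av123 (n # R) (fst r) (snd r)"
    by (simp add: run_append r_def Let_def)
  also have "\<dots> = run av123 R ([] @ n # fst r) (snd r)"
    using avn by (simp add: run_push)
  also have "\<dots> = (fst (run ok12 R [] (snd r)) @ n # fst r, snd (run ok12 R [] (snd r)))"
    using avn assms sr by (intro above_n) (auto simp: less_imp_le)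
  finally have e: "run av123 (L @ n # R) [] [] = \<dots>" .
  have "sc12 R = snd (run ok12 R [] []) @ fst (run ok12 R [] [])" by (simp add: sc12_def sc_aux_run Let_def)
  then show ?thesis
    using e run_out[of ok12 R "[]" "snd r"] unfolding SC_eq by (simp add: sc_aux_run Let_def r_def)
qed

lemma interval_split:
  fixes X Y :: "nat set"
  assumes "X \<union> Y = {p..<q}" "X \<inter> Y = {}" "\<forall>x\<in>X. \<forall>y\<in>Y. y < x" "p \<le> q"
  shows "\<exists>c. p \<le> c \<and> c \<le> q \<and> X = {c..<q} \<and> Y = {p..<c}"
proof (cases "X = {}")
  case True then show ?thesis using assms by (intro exI[of _ q]) auto
next
  case False
  have fX: "finite X" using assms(1) by (metis finite_Un finite_atLeastLessThan)
  define c where "c = Min X"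
  have cX: "c \<in> X" using False fX c_def by simp
  have cle: "\<forall>x\<in>X. c \<le> x" using fX c_def by simp
  have cin: "c \<in> {p..<q}" using cX assms(1) by blast
  have X: "X = {c..<q}"
  proof
    show "X \<subseteq> {c..<q}" using cle assms(1) by auto
  next
    show "{c..<q} \<subseteq> X"
    proof
      fix x assume x: "x \<in> {c..<q}"
      then have "x \<in> X \<union> Y" using assms(1) cin by auto
      moreover have "x \<notin> Y" using assms(3) cX x by force
      ultimately show "x \<in> X" by simp
    qed
  qed
  have Y: "Y = {p..<c}"
  proof
    show "Y \<subseteq> {p..<c}"
    proof
      fix y assume y: "y \<in> Y"
      then have "y < c" using assms(3) cX by blast
      moreover have "p \<le> y" using y assms(1) by auto
      ultimately show "y \<in> {p..<c}" by simp
    qed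
  next
    show "{p..<c} \<subseteq> Y"
    proof
      fix x assume x: "x \<in> {p..<c}"
      then have "x \<in> X \<union> Y" using assms(1) cin by auto
      moreover have "x \<notin> X" using cle x by force
      ultimately show "x \<in> Y" by simp
    qed
  qed
  show ?thesis using X Y cin by (intro exI[of _ c]) auto
qed

definition PL :: "nat list \<Rightarrow> bool" where
  "PL L \<longleftrightarrow> snd (run av123 L [] []) = [] \<and> sorted (west_s (rev L))"

definition GL :: "nat \<Rightarrow> nat \<Rightarrow> nat list set" where
  "GL a b = {L. distinct L \<and> set L = {a..<b} \<and> PL L}"

definition G12 :: "nat \<Rightarrow> nat \<Rightarrow> nat list set" where
  "G12 a b = {R. distinct R \<and> set R = {a..<b} \<and> sorted_wrt (>) (sc12 R)}"

lemma good_iff: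
  assumes "\<tau> \<in> perms n"
  shows "\<tau> \<in> Sort_n [1,2,3] {0} n \<longleftrightarrow> sorted (west_s (SC [1,2,3] {0} \<tau>))"
proof -
  let ?w = "west_s (SC [1,2,3] {0} \<tau>)"
  have m: "mset ?w = mset \<tau>" unfolding west_mset SC_eq sc_aux_mset by simp
  have d: "distinct ?w" using assms m mset_eq_imp_distinct_iff[OF m] by (simp add: perms_def)
  have s: "set ?w = {1..n}" using assms mset_eq_setD[OF m] by (simp add: perms_def)
  have st: "set [1..<n+1] = {1..n}" by auto
  have "?w = [1..<n+1] \<longleftrightarrow> sorted ?w"
  proof
    assume "?w = [1..<n+1]" then show "sorted ?w" by (simp only: sorted_upt)
  next
    assume "sorted ?w"
    then show "?w = [1..<n+1]"
      using sorted_distinct_set_unique[of ?w "[1..<n+1]"] d s st by (simp only: sorted_upt distinct_upt)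
  qed
  then show ?thesis using assms unfolding Sort_n_def by blast
qed


lemma char_sub:
  assumes "n \<ge> 1" "\<tau> \<in> Sort_n [1,2,3] {0} n"
  shows "\<exists>c\<in>{1..n}. \<exists>L R. L \<in> GL c n \<and> R \<in> G12 1 c \<and> \<tau> = L @ n # R"
proof -
  have p: "\<tau> \<in> perms n" using assms(2) by (simp add: Sort_n_def)
  then have dt: "distinct \<tau>" and stau: "set \<tau> = {1..n}" by (auto simp: perms_def)
  have good: "sorted (west_s (SC [1,2,3] {0} \<tau>))" using good_iff[OF p] assms(2) by simp
  have "n \<in> set \<tau>" using stau assms(1) by simp
  then obtain L R where t: "\<tau> = L @ n # R" by (meson split_list)
  have dL: "distinct L" and dR: "distinct R" and nL: "n \<notin> set L" and nR: "n \<notin> set R"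
    and dLR: "set L \<inter> set R = {}" using dt t by auto
  have sLR: "set L \<union> set R = {1..<n}"
  proof -
    have e: "insert n (set L \<union> set R) = {1..n}" using stau t by auto
    have "set L \<union> set R = insert n (set L \<union> set R) - {n}" using nL nR by auto
    also have "\<dots> = {1..n} - {n}" using e by simp
    also have "\<dots> = {1..<n}" by auto
    finally show ?thesis .
  qed
  have Ln: "\<forall>x\<in>set L. x < n" and Rn: "\<forall>x\<in>set R. x < n" using sLR by auto
  define Ob where "Ob = snd (run av123 L [] [])"
  define B where "B = fst (run av123 L [] [])"
  have SCe: "SC [1,2,3] {0} \<tau> = (Ob @ sc12 R) @ n # B"
    using SC_decomp[OF Ln Rn] t Ob_def B_def by simp
  have setOB: "set B \<union> set Ob = set L"
    using run_set[of av123 L "[]" "[]"] Ob_def B_def by simp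
  have msOB: "mset B + mset Ob = mset L"
    using run_mset[of av123 L "[]" "[]"] Ob_def B_def by simp
  have dOB: "distinct (B @ Ob)"
    using mset_eq_imp_distinct_iff[of "B @ Ob" L] msOB dL by simp
  have lt1: "\<forall>x\<in>set (Ob @ sc12 R). x < n" using setOB Rn Ln by (auto simp: sc12_set)
  have lt2: "\<forall>x\<in>set B. x < n" using setOB Ln by auto
  have dec: "sorted (west_s (Ob @ sc12 R)) \<and> sorted (west_s B) \<and> (\<forall>x\<in>set (Ob @ sc12 R). \<forall>y\<in>set B. x \<le> y)"
    using west_sorted_decomp[OF lt1 lt2] good SCe by simp
  have O0: "Ob = []"
  proof (rule ccontr)
    assume "Ob \<noteq> []"
    then obtain t where tO: "t \<in> set Ob" by (cases Ob) auto
    then have tL: "t \<in> set L" using setOB by auto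
    then have Lne: "L \<noteq> []" by auto
    define z where "z = Min (set L)"
    have zL: "z \<in> set L" using Lne z_def by simp
    have zle: "\<forall>x\<in>set L. z \<le> x" using z_def by simp
    have zB: "z \<in> set B" unfolding B_def
      using av123_min_stays[of "[]" z L "[]"] zL zle by simp
    have "t \<le> z" using dec tO zB by auto
    moreover have "z \<le> t" using zle tL by auto
    moreover have "t \<noteq> z" using dOB tO zB by auto
    ultimately show False by simp
  qed
  have BL: "B = rev L" using run_nopop[of av123 L "[]" "[]"] O0 Ob_def B_def by simp
  have RL: "\<forall>x\<in>set L. \<forall>y\<in>set R. y < x"
  proof (intro ballI)
    fix x y assume x: "x \<in> set L" and y: "y \<in> set R"
    have "y \<le> x" using dec x y BL by (auto simp: sc12_set)
    moreover have "y \<noteq> x" using dLR x y by auto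
    ultimately show "y < x" by simp
  qed
  obtain c where c: "1 \<le> c" "c \<le> n" "set L = {c..<n}" "set R = {1..<c}"
    using interval_split[OF sLR dLR RL] assms(1) by auto
  have "L \<in> GL c n" unfolding GL_def PL_def using dL c(3) O0 Ob_def dec BL by simp
  moreover have "R \<in> G12 1 c" unfolding G12_def using dR c(4) dec O0 D_equiv[OF dR] by simp
  ultimately show ?thesis using c t by (intro bexI[of _ c] exI[of _ L] exI[of _ R]) auto
qed

lemma char_sup:
  assumes "n \<ge> 1" "c \<in> {1..n}" "L \<in> GL c n" "R \<in> G12 1 c"
  shows "L @ n # R \<in> Sort_n [1,2,3] {0} n"
proof -
  have dL: "distinct L" "set L = {c..<n}" "snd (run av123 L [] []) = []" "sorted (west_s (rev L))"
    using assms(3) by (auto simp: GL_def PL_def)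
  have dR: "distinct R" "set R = {1..<c}" "sorted_wrt (>) (sc12 R)"
    using assms(4) by (auto simp: G12_def)
  have p: "L @ n # R \<in> perms n"
  proof -
    have cb: "1 \<le> c" "c \<le> n" using assms(2) by auto
    have "distinct (L @ n # R)" using dL dR cb by auto
    moreover have "set (L @ n # R) = {1..n}"
    proof -
      have "set (L @ n # R) = {c..<n} \<union> {n} \<union> {1..<c}" using dL dR by auto
      also have "\<dots> = {1..n}" using cb by auto
      finally show ?thesis .
    qed
    ultimately show ?thesis by (simp add: perms_def)
  qed
  have Ln: "\<forall>x\<in>set L. x < n" and Rn: "\<forall>x\<in>set R. x < n" using dL dR assms(2) by auto
  have B: "fst (run av123 L [] []) = rev L" using run_nopop[of av123 L "[]" "[]"] dL(3) by simp
  have SCe: "SC [1,2,3] {0} (L @ n # R) = sc12 R @ n # rev L"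
    using SC_decomp[OF Ln Rn] dL(3) B by simp
  have lt1: "\<forall>x\<in>set (sc12 R). x < n" using Rn by (simp add: sc12_set)
  have lt2: "\<forall>x\<in>set (rev L). x < n" using Ln by simp
  have "sorted (west_s (sc12 R))" using dec_west[OF dR(3)] .
  moreover have "\<forall>x\<in>set (sc12 R). \<forall>y\<in>set (rev L). x \<le> y" using dL(2) dR(2) by (auto simp: sc12_set)
  ultimately have "sorted (west_s (SC [1,2,3] {0} (L @ n # R)))"
    using west_sorted_decomp[OF lt1 lt2] dL(4) SCe by simp
  then show ?thesis using good_iff[OF p] by simp
qed

lemma char:
  assumes "n \<ge> 1"
  shows "Sort_n [1,2,3] {0} n = (\<Union>c\<in>{1..n}. (\<lambda>(L,R). L @ n # R) ` (GL c n \<times> G12 1 c))"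
proof
  show "Sort_n [1,2,3] {0} n \<subseteq> (\<Union>c\<in>{1..n}. (\<lambda>(L,R). L @ n # R) ` (GL c n \<times> G12 1 c))"
  proof
    fix \<tau> assume "\<tau> \<in> Sort_n [1,2,3] {0} n"
    then obtain c L R where "c \<in> {1..n}" "L \<in> GL c n" "R \<in> G12 1 c" "\<tau> = L @ n # R"
      using char_sub[OF assms] by blast
    then show "\<tau> \<in> (\<Union>c\<in>{1..n}. (\<lambda>(L,R). L @ n # R) ` (GL c n \<times> G12 1 c))" by auto
  qed
next
  show "(\<Union>c\<in>{1..n}. (\<lambda>(L,R). L @ n # R) ` (GL c n \<times> G12 1 c)) \<subseteq> Sort_n [1,2,3] {0} n"
    using char_sup[OF assms] by auto
qed




lemma choose_mult: "(m choose Suc k) * Suc k = (m choose k) * (m - k)"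
  by (metis binomial_absorb_comp binomial_absorption mult.commute)

lemma choose_ratio: "(Suc n) * ((2*n) choose (Suc n)) = n * ((2*n) choose n)"
  using choose_mult[of "2*n" n] by (simp add: mult.commute)

lemma catalan_real: "real (catalan n) * (real n + 1) = real ((2*n) choose n)"
proof -
  define C where "C = (2*n) choose n"
  define D where "D = (2*n) choose (Suc n)"
  have r: "Suc n * D = n * C" unfolding C_def D_def by (rule choose_ratio)
  have "Suc n * (C - D) = Suc n * C - Suc n * D" by (rule diff_mult_distrib2)
  also have "\<dots> = Suc n * C - n * C" by (simp only: r)
  also have "\<dots> = C" by simp
  finally have e: "Suc n * (C - D) = C" .
  have "catalan n = C div Suc n" unfolding catalan_def C_def by simp
  also have "\<dots> = C - D" using e by (metis nonzero_mult_div_cancel_left nat.simps(3))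
  finally have "catalan n = C - D" .
  then have "catalan n * Suc n = C" using e by (simp only: mult.commute)
  then have "real (catalan n * Suc n) = real C" by (simp only:)
  then show ?thesis unfolding C_def by (simp add: algebra_simps)
qed

lemma central_nat: "(Suc n) * (2 * Suc n choose Suc n) = 2*(2*n+1) * (2*n choose n)"
proof -
  have a: "Suc n * (2 * Suc n choose Suc n) = Suc (Suc (2*n)) * (Suc (2*n) choose n)"
    using Suc_times_binomial[of n "Suc (2*n)"] by simp
  have b: "(Suc (2*n) choose Suc n) * Suc n = (Suc (2*n) choose n) * Suc n"
    using choose_mult[of "Suc (2*n)" n] by simp
  have c: "Suc n * (Suc (2*n) choose Suc n) = Suc (2*n) * (2*n choose n)"
    using Suc_times_binomial[of n "2*n"] by simp
  have "Suc n * (Suc n * (2 * Suc n choose Suc n)) = Suc n * (2*(2*n+1) * (2*n choose n))"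
    using a b c by (simp add: algebra_simps)
  then show ?thesis by (metis mult_cancel_left nat.simps(3))
qed

declare binomial_Suc_Suc[simp del]

lemma central_ratio: "real ((2*(Suc n)) choose (Suc n)) * (real n+1) = real ((2*n) choose n) * (2*(2*real n+1))"
proof -
  have "real (Suc n * (2 * Suc n choose Suc n)) = real (2*(2*n+1) * (2*n choose n))"
    using central_nat by (simp only:)
  then show ?thesis by (simp add: algebra_simps)
qed

lemma aux1: fixes a b G G' P :: real assumes "a * G' = (1/2 - b) * G"
  shows "a * (G' * (-4 * P)) = (4*b - 2) * (G * P)"
proof -
  have "a * (G' * (-4 * P)) = (a * G') * (-4 * P)" by (simp only: mult.assoc)
  also have "\<dots> = (1/2 - b) * G * (-4 * P)" by (simp only: assms)
  also have "\<dots> = (4*b - 2) * (G * P)" by (simp add: algebra_simps)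
  finally show ?thesis .
qed
definition sh :: "nat \<Rightarrow> real" where
  "sh n = ((1/2) gchoose n) * (-4)^n"

lemma sh_0: "sh 0 = 1" by (simp add: sh_def)

lemma sh_ratio: "real (Suc k) * sh (Suc k) = (4 * real k - 2) * sh k"
proof -
  have "(1/2::real) * ((1/2) gchoose k) = real k * ((1/2) gchoose k) + real (Suc k) * ((1/2) gchoose Suc k)"
    by (rule gbinomial_mult_1)
  then have e: "real (Suc k) * ((1/2) gchoose Suc k) = (1/2 - real k) * ((1/2::real) gchoose k)"
    by (simp add: algebra_simps)
  have "real (Suc k) * ((1/2 gchoose Suc k) * (-4 * (-4)^k)) = (4*real k - 2) * ((1/2 gchoose k) * (-4)^k)"
    by (rule aux1[OF e])
  then show ?thesis unfolding sh_def power_Suc .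
qed

lemma sh_Suc: "sh (Suc n) = - 2 * real (catalan n)"
proof (induction n)
  case 0
  then show ?case by (simp add: sh_def catalan_def)
next
  case (Suc n)
  have r: "real (Suc (Suc n)) * sh (Suc (Suc n)) = (4 * real (Suc n) - 2) * sh (Suc n)"
    by (rule sh_ratio)
  define X where "X = real ((2*n) choose n)"
  define Y where "Y = real ((2*Suc n) choose Suc n)"
  have c1: "real (catalan n) * (real n + 1) = X" unfolding X_def by (rule catalan_real)
  have c2: "real (catalan (Suc n)) * (real n + 2) = Y"
  proof -
    have e: "real (Suc n) + 1 = real n + 2" by simp
    have "real (catalan (Suc n)) * (real (Suc n) + 1) = Y" unfolding Y_def by (rule catalan_real)
    then show ?thesis by (simp only: e)
  qed
  have cr: "Y * (real n + 1) = X * (2*(2*real n+1))" unfolding X_def Y_def by (rule central_ratio)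
  have "(real (catalan (Suc n)) * (real n + 2)) * (real n + 1) = (real (catalan n) * (2*(2*real n+1))) * (real n + 1)"
  proof -
    have "(real (catalan (Suc n)) * (real n + 2)) * (real n + 1) = Y * (real n + 1)" using c2 by simp
    also have "\<dots> = X * (2*(2*real n+1))" by (rule cr)
    also have "\<dots> = (real (catalan n) * (real n + 1)) * (2*(2*real n+1))" using c1 by simp
    finally show ?thesis by (simp add: algebra_simps)
  qed
  then have cc: "real (catalan (Suc n)) * (real n + 2) = real (catalan n) * (2*(2*real n+1))"
    using mult_right_cancel[of "real n + 1" "real (catalan (Suc n)) * (real n + 2)" "real (catalan n) * (2*(2*real n+1))"]
    by simp
  have "real (Suc (Suc n)) * sh (Suc (Suc n)) = real (Suc (Suc n)) * (- 2 * real (catalan (Suc n)))"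
    using r Suc cc by (simp add: algebra_simps)
  then show ?case by (metis mult_cancel_left of_nat_eq_0_iff nat.simps(3))
qed

lemma sh_conv: "(\<Sum>j=0..n. sh j * sh (n - j)) = (1 gchoose n) * (-4)^n"
proof -
  have "(\<Sum>j=0..n. sh j * sh (n - j)) = (\<Sum>j=0..n. ((1/2::real) gchoose j) * ((1/2) gchoose (n - j)) * (-4)^n)"
  proof (rule sum.cong)
    fix j assume "j \<in> {0..n}"
    then have "(-4::real)^n = (-4)^j * (-4)^(n-j)" by (simp add: power_add[symmetric])
    then show "sh j * sh (n - j) = ((1/2::real) gchoose j) * ((1/2) gchoose (n - j)) * (-4)^n"
      unfolding sh_def by simp
  qed simp
  also have "\<dots> = (\<Sum>j=0..n. ((1/2::real) gchoose j) * ((1/2) gchoose (n - j))) * (-4)^n"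
    by (simp add: sum_distrib_right)
  also have "\<dots> = (1 gchoose n) * (-4)^n"
    using gbinomial_Vandermonde[of "1/2::real" "1/2" n] by simp
  finally show ?thesis .
qed

lemma catalan_rec: "catalan (Suc k) = (\<Sum>j=0..k. catalan j * catalan (k - j))"
proof -
  have g0: "(1::nat) choose Suc (Suc k) = 0" by (simp add: binomial_eq_0)
  have "real ((1::nat) choose Suc (Suc k)) = ((of_nat 1)::real) gchoose Suc (Suc k)" by (rule binomial_gbinomial)
  then have g: "(1::real) gchoose (Suc (Suc k)) = 0" by (simp only: g0 of_nat_0 of_nat_1)
  define f where "f = (\<lambda>j. sh j * sh (Suc (Suc k) - j))"
  have "sum f {0..Suc (Suc k)} = (1 gchoose (Suc (Suc k))) * (-4)^(Suc (Suc k))"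
    unfolding f_def by (rule sh_conv)
  then have S0: "sum f {0..Suc (Suc k)} = 0" by (simp only: g mult_zero_left)
  have a: "sum f {0..Suc (Suc k)} = sum f {0..Suc k} + f (Suc (Suc k))" by (rule sum.atLeast0_atMost_Suc)
  have b0: "sum f {0..Suc k} = f 0 + sum (f \<circ> Suc) {0..k}" by (rule sum.atLeast0_atMost_Suc_shift)
  have b: "sum f {0..Suc k} = f 0 + sum (\<lambda>j. f (Suc j)) {0..k}" using b0 by (simp only: comp_def)
  define X where "X = sh (Suc (Suc k))"
  define T where "T = (\<Sum>j=0..k. real (catalan j) * real (catalan (k - j)))"
  have f0: "f 0 = X" unfolding f_def X_def by (simp add: sh_0)
  have fl: "f (Suc (Suc k)) = X" unfolding f_def X_def by (simp add: sh_0)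
  have fm: "sum (\<lambda>j. f (Suc j)) {0..k} = 4 * T"
  proof -
    have "sum (\<lambda>j. f (Suc j)) {0..k} = (\<Sum>j=0..k. 4 * (real (catalan j) * real (catalan (k - j))))"
    proof (rule sum.cong)
      fix j assume "j \<in> {0..k}"
      then have e: "Suc (Suc k) - Suc j = Suc (k - j)" by auto
      show "f (Suc j) = 4 * (real (catalan j) * real (catalan (k - j)))"
        unfolding f_def e sh_Suc by simp
    qed (rule refl)
    then show ?thesis unfolding T_def by (simp only: sum_distrib_left)
  qed
  have "X + 4 * T + X = 0" using S0 a b f0 fl fm by simp
  moreover have "X = - 2 * real (catalan (Suc k))" unfolding X_def by (rule sh_Suc)
  ultimately have "real (catalan (Suc k)) = T" by simp
  then have "real (catalan (Suc k)) = real (\<Sum>j=0..k. catalan j * catalan (k - j))"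
    unfolding T_def by simp
  then show ?thesis by (simp only: of_nat_eq_iff)
qed


lemma run_decomp:
  fixes n :: "'a::linorder"
  assumes "\<forall>x\<in>set L. x < n" "\<forall>x\<in>set R. x < n"
  shows "run av123 (L @ n # R) [] [] =
     (fst (run ok12 R [] []) @ n # fst (run av123 L [] []), snd (run av123 L [] []) @ snd (run ok12 R [] []))"
proof -
  define r where "r = run av123 L [] []"
  have sr: "set (fst r) \<subseteq> set L" using run_fst_set[of av123 L "[]" "[]"] r_def by simp
  have avr: "av123 (fst r)" using run_av123_inv[of "[]" L "[]"] r_def by simp
  have avn: "av123 (n # fst r)"
  proof (cases "fst r")
    case Nil then show ?thesis by simp
  next
    case (Cons b B)
    then have "b < n" using sr assms by auto
    then show ?thesis using avr Cons by auto
  qed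
  have "run av123 (L @ n # R) [] [] = run av123 (n # R) (fst r) (snd r)"
    by (simp add: run_append r_def Let_def)
  also have "\<dots> = run av123 R ([] @ n # fst r) (snd r)"
    using avn by (simp add: run_push)
  also have "\<dots> = (fst (run ok12 R [] (snd r)) @ n # fst r, snd (run ok12 R [] (snd r)))"
    using avn assms sr by (intro above_n) (auto simp: less_imp_le)
  finally show ?thesis using run_out[of ok12 R "[]" "snd r"] r_def by simp
qed

lemma ok12_nopop_gen:
  fixes xs S out :: "'a::linorder list"
  shows "snd (run ok12 xs S out) = out \<longleftrightarrow> sorted (take 1 S @ xs)"
proof (induction "ok12 :: 'a list \<Rightarrow> bool" xs S out rule: run.induct)
  case (1 st out)
  then show ?case by (cases st) simp_all
next
  case (2 x xs S out)
  show ?case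
  proof (cases "S = [] \<or> ok12 (x # S)")
    case True
    have e: "run ok12 (x # xs) S out = run ok12 xs (x # S) out" using True by (rule run_push)
    have "sorted (take 1 S @ x # xs) \<longleftrightarrow> sorted (x # xs)"
    proof (cases S)
      case Nil then show ?thesis by simp
    next
      case (Cons s S') then show ?thesis using True by auto
    qed
    then show ?thesis using 2(1)[OF True] e by simp
  next
    case False
    then obtain s S' where S: "S = s # S'" and xs: "x < s" by (cases S rule: ok12.cases) auto
    have e: "run ok12 (x # xs) S out = run ok12 (x # xs) S' (out @ [s])"
      using False S by (simp add: run_pop)
    have "length (out @ [s]) \<le> length (snd (run ok12 (x # xs) S' (out @ [s])))" by (rule run_out_len)
    then have "snd (run ok12 (x # xs) S out) \<noteq> out" using e by auto
    moreover have "\<not> sorted (take 1 S @ x # xs)" using S xs by auto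
    ultimately show ?thesis by simp
  qed
qed

lemma ok12_nopop: "snd (run ok12 xs [] []) = [] \<longleftrightarrow> sorted (xs :: 'a::linorder list)"
  using ok12_nopop_gen[of xs "[]" "[]"] by simp

lemma PL_decomp:
  fixes m :: nat
  assumes "\<forall>x\<in>set A. x < m" "\<forall>x\<in>set B. x < m" "distinct B"
  shows "PL (A @ m # B) \<longleftrightarrow> PL A \<and> sorted B \<and> (\<forall>x\<in>set B. \<forall>y\<in>set A. x \<le> y)"
proof -
  have s: "snd (run av123 (A @ m # B) [] []) = snd (run av123 A [] []) @ snd (run ok12 B [] [])"
    using run_decomp[OF assms(1,2)] by simp
  have r: "rev (A @ m # B) = rev B @ m # rev A" by simp
  have w: "sorted (west_s (rev (A @ m # B))) \<longleftrightarrow>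
     sorted (west_s (rev B)) \<and> sorted (west_s (rev A)) \<and> (\<forall>x\<in>set (rev B). \<forall>y\<in>set (rev A). x \<le> y)"
    unfolding r using assms by (intro west_sorted_decomp) auto
  have sb: "sorted B \<Longrightarrow> sorted (west_s (rev B))"
  proof -
    assume "sorted B"
    then have "sorted_wrt (<) B" using assms(3) by (simp add: strict_sorted_iff)
    then have "sorted_wrt (>) (rev B)" by (simp add: sorted_wrt_rev)
    then show ?thesis by (rule dec_west)
  qed
  show ?thesis unfolding PL_def s w using sb by (auto simp: ok12_nopop)
qed

lemma fin_dl: "finite S \<Longrightarrow> finite {L. distinct L \<and> set L = S}"
proof -
  assume f: "finite S"
  have "{L. distinct L \<and> set L = S} \<subseteq> {xs. set xs \<subseteq> S \<and> length xs \<le> card S}"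
    using distinct_card by fastforce
  moreover have "finite {xs. set xs \<subseteq> S \<and> length xs \<le> card S}" using f by (rule finite_lists_length_le)
  ultimately show ?thesis by (rule finite_subset)
qed

lemma GL_fin: "finite (GL a b)"
  by (rule finite_subset[OF _ fin_dl[of "{a..<b}"]]) (auto simp: GL_def)

lemma G12_fin: "finite (G12 a b)"
  by (rule finite_subset[OF _ fin_dl[of "{a..<b}"]]) (auto simp: G12_def)

lemma GL_base: "GL a a = {[]}"
proof -
  have "PL []" unfolding PL_def by (simp add: west_nil)
  then show ?thesis unfolding GL_def by auto
qed

lemma G12_base: "G12 a a = {[]}"
proof -
  have "sc12 [] = ([] :: nat list)" by (simp add: sc12_def)
  then show ?thesis unfolding G12_def by auto
qed

lemma GL_rec:
  assumes "a \<le> m"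
  shows "GL a (Suc m) = (\<Union>c\<in>{a..m}. (\<lambda>A. A @ m # [a..<c]) ` GL c m)"
proof
  show "GL a (Suc m) \<subseteq> (\<Union>c\<in>{a..m}. (\<lambda>A. A @ m # [a..<c]) ` GL c m)"
  proof
    fix L assume L: "L \<in> GL a (Suc m)"
    then have dL: "distinct L" and sL: "set L = {a..<Suc m}" and pL: "PL L" by (auto simp: GL_def)
    have "m \<in> set L" using sL assms by simp
    then obtain A B where LAB: "L = A @ m # B" by (meson split_list)
    have dA: "distinct A" and dB: "distinct B" and mA: "m \<notin> set A" and mB: "m \<notin> set B"
      and dAB: "set A \<inter> set B = {}" using dL LAB by auto
    have sAB: "set A \<union> set B = {a..<m}"
    proof -
      have "set L = insert m (set A \<union> set B)" using LAB by auto
      then have "insert m (set A \<union> set B) = {a..<Suc m}" using sL by simp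
      then have "set A \<union> set B = {a..<Suc m} - {m}" using mA mB by auto
      also have "\<dots> = {a..<m}" by auto
      finally show ?thesis .
    qed
    have Am: "\<forall>x\<in>set A. x < m" and Bm: "\<forall>x\<in>set B. x < m" using sAB by auto
    have pd: "PL A \<and> sorted B \<and> (\<forall>x\<in>set B. \<forall>y\<in>set A. x \<le> y)"
      using PL_decomp[OF Am Bm dB] pL LAB by simp
    have lt: "\<forall>x\<in>set A. \<forall>y\<in>set B. y < x"
    proof (intro ballI)
      fix x y assume x: "x \<in> set A" and y: "y \<in> set B"
      have "y \<le> x" using pd x y by auto
      moreover have "y \<noteq> x" using dAB x y by auto
      ultimately show "y < x" by simp
    qed
    obtain c where c: "a \<le> c" "c \<le> m" "set A = {c..<m}" "set B = {a..<c}"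
      using interval_split[OF sAB dAB lt assms] by auto
    have sB: "sorted B" using pd by (rule conjunct1[OF conjunct2])
    have "B = [a..<c]"
      by (rule sorted_distinct_set_unique[OF sB dB sorted_upt distinct_upt]) (simp only: c(4) set_upt)
    moreover have "A \<in> GL c m" unfolding GL_def using dA c(3) pd by simp
    ultimately have "L \<in> (\<lambda>A. A @ m # [a..<c]) ` GL c m" using LAB by (intro rev_image_eqI[of A]) simp_all
    moreover have "c \<in> {a..m}" using c by simp
    ultimately show "L \<in> (\<Union>c\<in>{a..m}. (\<lambda>A. A @ m # [a..<c]) ` GL c m)" by (rule UN_I[rotated])
  qed
next
  show "(\<Union>c\<in>{a..m}. (\<lambda>A. A @ m # [a..<c]) ` GL c m) \<subseteq> GL a (Suc m)"
  proof
    fix L assume "L \<in> (\<Union>c\<in>{a..m}. (\<lambda>A. A @ m # [a..<c]) ` GL c m)"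
    then obtain c A where c: "a \<le> c" "c \<le> m" and A: "A \<in> GL c m" and L: "L = A @ m # [a..<c]" by auto
    have dA: "distinct A" "set A = {c..<m}" "PL A" using A by (auto simp: GL_def)
    have Am: "\<forall>x\<in>set A. x < m" and Bm: "\<forall>x\<in>set [a..<c]. x < m" using dA c by auto
    have "PL L" unfolding L using PL_decomp[OF Am Bm] dA c by auto
    moreover have "distinct L" using dA c L by auto
    moreover have "set L = {a..<Suc m}"
    proof -
      have "set L = {c..<m} \<union> {m} \<union> {a..<c}" using dA L by auto
      also have "\<dots> = {a..<Suc m}" using c by auto
      finally show ?thesis .
    qed
    ultimately show "L \<in> GL a (Suc m)" by (simp add: GL_def)
  qed
qed

definition gpow :: "nat \<Rightarrow> nat" where
  "gpow k = (if k = 0 then 1 else 2 ^ (k - 1))"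

lemma gpow_sum: "(\<Sum>i=0..k. gpow i) = 2 ^ k"
proof (induction k)
  case 0 then show ?case by (simp add: gpow_def)
next
  case (Suc k) then show ?case by (simp add: gpow_def)
qed

lemma card_GL: "card (GL a (a + k)) = gpow k"
proof (induction k arbitrary: a rule: less_induct)
  case (less k)
  show ?case
  proof (cases k)
    case 0 then show ?thesis by (simp add: GL_base gpow_def)
  next
    case (Suc k')
    define m where "m = a + k'"
    have am: "a \<le> m" using m_def by simp
    have e: "GL a (a + k) = (\<Union>c\<in>{a..m}. (\<lambda>A. A @ m # [a..<c]) ` GL c m)"
      using GL_rec[OF am] Suc m_def by simp
    have inj: "inj_on (\<lambda>A. A @ m # [a..<c]) (GL c m)" for c
      by (rule inj_onI) simp
    have disj: "\<forall>c\<in>{a..m}. \<forall>c'\<in>{a..m}. c \<noteq> c' \<longrightarrow>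
       (\<lambda>A. A @ m # [a..<c]) ` GL c m \<inter> (\<lambda>A. A @ m # [a..<c']) ` GL c' m = {}"
    proof (intro ballI impI)
      fix c c' assume c: "c \<in> {a..m}" and c': "c' \<in> {a..m}" and ne: "c \<noteq> c'"
      show "(\<lambda>A. A @ m # [a..<c]) ` GL c m \<inter> (\<lambda>A. A @ m # [a..<c']) ` GL c' m = {}"
      proof (rule ccontr)
        assume "\<not> ?thesis"
        then obtain x where x1: "x \<in> (\<lambda>A. A @ m # [a..<c]) ` GL c m"
          and x2: "x \<in> (\<lambda>A. A @ m # [a..<c']) ` GL c' m" by auto
        from x1 obtain A where A: "A \<in> GL c m" and xA: "x = A @ m # [a..<c]" by (rule imageE)
        from x2 obtain A' where xA': "x = A' @ m # [a..<c']" by (rule imageE)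
        have eq: "A @ m # [a..<c] = A' @ m # [a..<c']" using xA xA' by simp
        have h1: "m \<notin> set A" using A by (auto simp: GL_def)
        have h2: "m \<notin> set [a..<c]" using c by auto
        have "A = A' \<and> [a..<c] = [a..<c']" using append_Cons_eq_iff[OF h1 h2] eq by (rule iffD1)
        then have "[a..<c] = [a..<c']" by (rule conjunct2)
        then have "length [a..<c] = length [a..<c']" by simp
        then show False using c c' ne by auto
      qed
    qed
    have "card (GL a (a + k)) = (\<Sum>c\<in>{a..m}. card ((\<lambda>A. A @ m # [a..<c]) ` GL c m))"
      unfolding e by (rule card_UN_disjoint) (auto simp: GL_fin disj)
    also have "\<dots> = (\<Sum>c\<in>{a..m}. card (GL c m))"
      using inj by (simp add: card_image)
    also have "\<dots> = (\<Sum>c\<in>{a..m}. gpow (m - c))"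
    proof (rule sum.cong)
      fix c assume c: "c \<in> {a..m}"
      have "m - c < k" using c Suc m_def by auto
      then have "card (GL c (c + (m - c))) = gpow (m - c)" by (rule less)
      then show "card (GL c m) = gpow (m - c)" using c by simp
    qed simp
    also have "\<dots> = (\<Sum>i=0..k'. gpow (k' - i))"
      using sum.shift_bounds_cl_nat_ivl[of "\<lambda>c. gpow (m - c)" 0 a k'] m_def by (simp add: add.commute)
    also have "\<dots> = (\<Sum>i=0..k'. gpow i)"
      using sum.atLeastAtMost_rev[of "\<lambda>i. gpow (k' - i)" 0 k'] by simp
    also have "\<dots> = 2 ^ k'" by (rule gpow_sum)
    also have "\<dots> = gpow k" using Suc by (simp add: gpow_def)
    finally show ?thesis .
  qed
qed


lemma G12_rec:
  assumes "a < b"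
  shows "G12 a b = (\<Union>c\<in>{Suc a..b}. (\<lambda>(A,B). A @ a # B) ` (G12 c b \<times> G12 (Suc a) c))"
proof
  show "G12 a b \<subseteq> (\<Union>c\<in>{Suc a..b}. (\<lambda>(A,B). A @ a # B) ` (G12 c b \<times> G12 (Suc a) c))"
  proof
    fix R assume R: "R \<in> G12 a b"
    then have dR: "distinct R" and sR: "set R = {a..<b}" and sw: "sorted_wrt (>) (sc12 R)"
      by (auto simp: G12_def)
    have "a \<in> set R" using sR assms by simp
    then obtain A B where RAB: "R = A @ a # B" by (meson split_list)
    have dA: "distinct A" and dB: "distinct B" and aA: "a \<notin> set A" and aB: "a \<notin> set B"
      and dAB: "set A \<inter> set B = {}" using dR RAB by auto
    have sAB: "set A \<union> set B = {Suc a..<b}"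
    proof -
      have "set R = insert a (set A \<union> set B)" using RAB by auto
      then have "insert a (set A \<union> set B) = {a..<b}" using sR by simp
      then have "set A \<union> set B = {a..<b} - {a}" using aA aB by auto
      also have "\<dots> = {Suc a..<b}" by auto
      finally show ?thesis .
    qed
    have AB: "\<forall>x\<in>set A \<union> set B. a < x" unfolding sAB by auto
    have AB2: "(\<forall>x\<in>set A. a < x) \<and> (\<forall>x\<in>set B. a < x)" using AB by (simp only: ball_Un)
    have Aa: "\<forall>x\<in>set A. a < x" using AB2 by (rule conjunct1)
    have Ba: "\<forall>x\<in>set B. a < x" using AB2 by (rule conjunct2)
    have sc: "sc12 R = sc12 A @ sc12 B @ [a]" using sc12_decomp[OF Aa Ba] RAB by simp
    have swA: "sorted_wrt (>) (sc12 A)" and swB: "sorted_wrt (>) (sc12 B)"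
      and cross: "\<forall>x\<in>set (sc12 A). \<forall>y\<in>set (sc12 B @ [a]). y < x"
      using sw unfolding sc by (simp_all add: sorted_wrt_append)
    have lt: "\<forall>x\<in>set A. \<forall>y\<in>set B. y < x" using cross by (simp add: sc12_set)
    obtain c where c: "Suc a \<le> c" "c \<le> b" "set A = {c..<b}" "set B = {Suc a..<c}"
      using interval_split[OF sAB dAB lt] assms by auto
    have "A \<in> G12 c b" unfolding G12_def using dA c(3) swA by simp
    moreover have "B \<in> G12 (Suc a) c" unfolding G12_def using dB c(4) swB by simp
    ultimately have "R \<in> (\<lambda>(A,B). A @ a # B) ` (G12 c b \<times> G12 (Suc a) c)"
      using RAB by (intro rev_image_eqI[of "(A,B)"]) simp_all
    moreover have "c \<in> {Suc a..b}" using c by simp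
    ultimately show "R \<in> (\<Union>c\<in>{Suc a..b}. (\<lambda>(A,B). A @ a # B) ` (G12 c b \<times> G12 (Suc a) c))"
      by (rule UN_I[rotated])
  qed
next
  show "(\<Union>c\<in>{Suc a..b}. (\<lambda>(A,B). A @ a # B) ` (G12 c b \<times> G12 (Suc a) c)) \<subseteq> G12 a b"
  proof
    fix R assume "R \<in> (\<Union>c\<in>{Suc a..b}. (\<lambda>(A,B). A @ a # B) ` (G12 c b \<times> G12 (Suc a) c))"
    then obtain c A B where c: "Suc a \<le> c" "c \<le> b" and A: "A \<in> G12 c b" and B: "B \<in> G12 (Suc a) c"
      and R: "R = A @ a # B" by auto
    have dA: "distinct A" "set A = {c..<b}" "sorted_wrt (>) (sc12 A)" using A by (auto simp: G12_def)
    have dB: "distinct B" "set B = {Suc a..<c}" "sorted_wrt (>) (sc12 B)" using B by (auto simp: G12_def)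
    have Aa: "\<forall>x\<in>set A. a < x" and Ba: "\<forall>x\<in>set B. a < x" using dA dB c by auto
    have sc: "sc12 R = sc12 A @ sc12 B @ [a]" using sc12_decomp[OF Aa Ba] R by simp
    have "sorted_wrt (>) (sc12 R)"
      unfolding sc using dA dB c Aa Ba by (auto simp: sorted_wrt_append sc12_set)
    moreover have "distinct R" using dA dB c R by auto
    moreover have "set R = {a..<b}"
    proof -
      have "set R = {c..<b} \<union> {a} \<union> {Suc a..<c}" using dA dB R by auto
      also have "\<dots> = {a..<b}" using c by auto
      finally show ?thesis .
    qed
    ultimately show "R \<in> G12 a b" by (simp add: G12_def)
  qed
qed

lemma card_G12: "card (G12 a (a + k)) = catalan k"
proof (induction k arbitrary: a rule: less_induct)
  case (less k)
  show ?case
  proof (cases k)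
    case 0 then show ?thesis by (simp add: G12_base catalan_def)
  next
    case (Suc k')
    define b where "b = a + k"
    define f where "f = (\<lambda>(A::nat list,B::nat list). A @ a # B)"
    have ab: "a < b" using b_def Suc by simp
    have e: "G12 a (a + k) = (\<Union>c\<in>{Suc a..b}. f ` (G12 c b \<times> G12 (Suc a) c))"
      using G12_rec[OF ab] b_def f_def by simp
    have inj: "inj_on f (G12 c b \<times> G12 (Suc a) c)" if c: "c \<in> {Suc a..b}" for c
    proof (rule inj_onI)
      fix p q assume p: "p \<in> G12 c b \<times> G12 (Suc a) c" and q: "q \<in> G12 c b \<times> G12 (Suc a) c"
        and eq: "f p = f q"
      obtain A B where pAB: "p = (A,B)" by (cases p)
      obtain A' B' where qAB: "q = (A',B')" by (cases q)
      have h1: "a \<notin> set A" using p pAB c by (auto simp: G12_def)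
      have h2: "a \<notin> set B" using p pAB c by (auto simp: G12_def)
      have eq': "A @ a # B = A' @ a # B'" using eq pAB qAB unfolding f_def by simp
      have "A = A' \<and> B = B'" using append_Cons_eq_iff[OF h1 h2] eq' by (rule iffD1)
      then show "p = q" using pAB qAB by simp
    qed
    have disj: "\<forall>c\<in>{Suc a..b}. \<forall>c'\<in>{Suc a..b}. c \<noteq> c' \<longrightarrow>
       f ` (G12 c b \<times> G12 (Suc a) c) \<inter> f ` (G12 c' b \<times> G12 (Suc a) c') = {}"
    proof (intro ballI impI)
      fix c c' assume c: "c \<in> {Suc a..b}" and c': "c' \<in> {Suc a..b}" and ne: "c \<noteq> c'"
      show "f ` (G12 c b \<times> G12 (Suc a) c) \<inter> f ` (G12 c' b \<times> G12 (Suc a) c') = {}"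
      proof (rule ccontr)
        assume h: "\<not> ?thesis"
        have "\<exists>x. x \<in> f ` (G12 c b \<times> G12 (Suc a) c) \<inter> f ` (G12 c' b \<times> G12 (Suc a) c')"
          unfolding ex_in_conv by (rule h)
        then obtain x where x: "x \<in> f ` (G12 c b \<times> G12 (Suc a) c) \<inter> f ` (G12 c' b \<times> G12 (Suc a) c')"
          by (rule exE)
        have x1: "x \<in> f ` (G12 c b \<times> G12 (Suc a) c)" using x by (rule IntD1)
        have x2: "x \<in> f ` (G12 c' b \<times> G12 (Suc a) c')" using x by (rule IntD2)
        from x1 obtain p where p: "p \<in> G12 c b \<times> G12 (Suc a) c" and xp: "x = f p" by (rule imageE)
        from x2 obtain q where q: "q \<in> G12 c' b \<times> G12 (Suc a) c'" and xq: "x = f q" by (rule imageE)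
        obtain A B where pAB: "p = (A,B)" by (cases p)
        obtain A' B' where qAB: "q = (A',B')" by (cases q)
        have h1: "a \<notin> set A" using p pAB c by (auto simp: G12_def)
        have h2: "a \<notin> set B" using p pAB c by (auto simp: G12_def)
        have eq': "A @ a # B = A' @ a # B'" using xp xq pAB qAB unfolding f_def by simp
        have "A = A' \<and> B = B'" using append_Cons_eq_iff[OF h1 h2] eq' by (rule iffD1)
        then have "B = B'" by (rule conjunct2)
        moreover have "set B = {Suc a..<c}" using p pAB by (simp add: G12_def)
        moreover have "set B' = {Suc a..<c'}" using q qAB by (simp add: G12_def)
        ultimately have "{Suc a..<c} = {Suc a..<c'}" by simp
        then have "card {Suc a..<c} = card {Suc a..<c'}" by simp
        then show False using c c' ne by auto
      qed
    qed
    have "card (G12 a (a + k)) = (\<Sum>c\<in>{Suc a..b}. card (f ` (G12 c b \<times> G12 (Suc a) c)))"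
      unfolding e by (rule card_UN_disjoint) (auto simp: G12_fin disj)
    also have "\<dots> = (\<Sum>c\<in>{Suc a..b}. card (G12 c b) * card (G12 (Suc a) c))"
    proof (rule sum.cong)
      fix c assume c: "c \<in> {Suc a..b}"
      show "card (f ` (G12 c b \<times> G12 (Suc a) c)) = card (G12 c b) * card (G12 (Suc a) c)"
        using card_image[OF inj[OF c]] by (simp add: card_cartesian_product)
    qed simp
    also have "\<dots> = (\<Sum>c\<in>{Suc a..b}. catalan (b - c) * catalan (c - Suc a))"
    proof (rule sum.cong)
      fix c assume c: "c \<in> {Suc a..b}"
      have "b - c < k" using c Suc b_def by auto
      then have "card (G12 c (c + (b - c))) = catalan (b - c)" by (rule less)
      then have 1: "card (G12 c b) = catalan (b - c)" using c by simp
      have "c - Suc a < k" using c Suc b_def by auto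
      then have "card (G12 (Suc a) (Suc a + (c - Suc a))) = catalan (c - Suc a)" by (rule less)
      then have 2: "card (G12 (Suc a) c) = catalan (c - Suc a)" using c by simp
      show "card (G12 c b) * card (G12 (Suc a) c) = catalan (b - c) * catalan (c - Suc a)"
        using 1 2 by simp
    qed simp
    also have "\<dots> = (\<Sum>i=0..k'. catalan (k' - i) * catalan i)"
    proof -
      have r: "(\<Sum>c\<in>{0 + Suc a..k' + Suc a}. catalan (b - c) * catalan (c - Suc a))
          = (\<Sum>i=0..k'. catalan (b - (i + Suc a)) * catalan (i + Suc a - Suc a))"
        by (rule sum.shift_bounds_cl_nat_ivl)
      have s: "{0 + Suc a..k' + Suc a} = {Suc a..b}" using b_def Suc by simp
      have t: "(\<Sum>i=0..k'. catalan (b - (i + Suc a)) * catalan (i + Suc a - Suc a))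
          = (\<Sum>i=0..k'. catalan (k' - i) * catalan i)"
      proof (rule sum.cong)
        fix i assume "i \<in> {0..k'}"
        have "b - (i + Suc a) = k' - i" using b_def Suc by simp
        then show "catalan (b - (i + Suc a)) * catalan (i + Suc a - Suc a) = catalan (k' - i) * catalan i"
          by simp
      qed simp
      show ?thesis using r t unfolding s by simp
    qed
    also have "\<dots> = (\<Sum>i=0..k'. catalan i * catalan (k' - i))"
      by (simp add: mult.commute)
    also have "\<dots> = catalan k" using Suc by (simp only: catalan_rec)
    finally show ?thesis .
  qed
qed


theorem mainTheorem13:
  fixes n :: nat
  assumes "n \<ge> 1"
  shows "card (Sort_n [1,2,3] {0} n) =
           catalan (n - 1) + (\<Sum>i<n - 1. 2 ^ (n - 2 - i) * catalan i)"
proof -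
  define f where "f = (\<lambda>(L::nat list, R::nat list). L @ n # R)"
  have e: "Sort_n [1,2,3] {0} n = (\<Union>c\<in>{1..n}. f ` (GL c n \<times> G12 1 c))"
    unfolding f_def by (rule char[OF assms])
  have nots: "n \<notin> set L \<and> n \<notin> set R" if c: "c \<in> {1..n}" and p: "(L, R) \<in> GL c n \<times> G12 1 c" for c L R
    using c p by (auto simp: GL_def G12_def)
  have inj: "inj_on f (GL c n \<times> G12 1 c)" if c: "c \<in> {1..n}" for c
  proof (rule inj_onI)
    fix p q assume p: "p \<in> GL c n \<times> G12 1 c" and q: "q \<in> GL c n \<times> G12 1 c" and eq: "f p = f q"
    obtain L R where pLR: "p = (L,R)" by (cases p)
    obtain L' R' where qLR: "q = (L',R')" by (cases q)
    have h: "n \<notin> set L \<and> n \<notin> set R" using nots[OF c] p pLR by simp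
    have h1: "n \<notin> set L" using h by (rule conjunct1)
    have h2: "n \<notin> set R" using h by (rule conjunct2)
    have eq': "L @ n # R = L' @ n # R'" using eq pLR qLR unfolding f_def by simp
    have "L = L' \<and> R = R'" using append_Cons_eq_iff[OF h1 h2] eq' by (rule iffD1)
    then show "p = q" using pLR qLR by simp
  qed
  have disj: "\<forall>c\<in>{1..n}. \<forall>c'\<in>{1..n}. c \<noteq> c' \<longrightarrow> f ` (GL c n \<times> G12 1 c) \<inter> f ` (GL c' n \<times> G12 1 c') = {}"
  proof (intro ballI impI)
    fix c c' assume c: "c \<in> {1..n}" and c': "c' \<in> {1..n}" and ne: "c \<noteq> c'"
    show "f ` (GL c n \<times> G12 1 c) \<inter> f ` (GL c' n \<times> G12 1 c') = {}"
    proof (rule ccontr)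
      assume h: "\<not> ?thesis"
      have "\<exists>x. x \<in> f ` (GL c n \<times> G12 1 c) \<inter> f ` (GL c' n \<times> G12 1 c')"
        unfolding ex_in_conv by (rule h)
      then obtain x where x: "x \<in> f ` (GL c n \<times> G12 1 c) \<inter> f ` (GL c' n \<times> G12 1 c')" by (rule exE)
      have x1: "x \<in> f ` (GL c n \<times> G12 1 c)" using x by (rule IntD1)
      have x2: "x \<in> f ` (GL c' n \<times> G12 1 c')" using x by (rule IntD2)
      from x1 obtain p where p: "p \<in> GL c n \<times> G12 1 c" and xp: "x = f p" by (rule imageE)
      from x2 obtain q where q: "q \<in> GL c' n \<times> G12 1 c'" and xq: "x = f q" by (rule imageE)
      obtain L R where pLR: "p = (L,R)" by (cases p)
      obtain L' R' where qLR: "q = (L',R')" by (cases q)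
      have h: "n \<notin> set L \<and> n \<notin> set R" using nots[OF c] p pLR by simp
      have h1: "n \<notin> set L" using h by (rule conjunct1)
      have h2: "n \<notin> set R" using h by (rule conjunct2)
      have eq': "L @ n # R = L' @ n # R'" using xp xq pLR qLR unfolding f_def by simp
      have "L = L' \<and> R = R'" using append_Cons_eq_iff[OF h1 h2] eq' by (rule iffD1)
      then have "R = R'" by (rule conjunct2)
      moreover have "set R = {1..<c}" using p pLR by (simp add: G12_def)
      moreover have "set R' = {1..<c'}" using q qLR by (simp add: G12_def)
      ultimately have "{1..<c} = {1..<c'}" by simp
      then have "card {1..<c} = card {1..<c'}" by simp
      then show False using c c' ne by auto
    qed
  qed
  have fin: "\<forall>c\<in>{1..n}. finite (f ` (GL c n \<times> G12 1 c))" using GL_fin G12_fin by auto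
  have "card (Sort_n [1,2,3] {0} n) = (\<Sum>c\<in>{1..n}. card (f ` (GL c n \<times> G12 1 c)))"
    unfolding e by (rule card_UN_disjoint[OF _ fin disj]) simp
  also have "\<dots> = (\<Sum>c\<in>{1..n}. gpow (n - c) * catalan (c - 1))"
  proof (rule sum.cong)
    fix c assume c: "c \<in> {1..n}"
    have "card (f ` (GL c n \<times> G12 1 c)) = card (GL c n) * card (G12 1 c)"
      using card_image[OF inj[OF c]] by (simp add: card_cartesian_product)
    moreover have "card (GL c (c + (n - c))) = gpow (n - c)" by (rule card_GL)
    moreover have "card (G12 1 (1 + (c - 1))) = catalan (c - 1)" by (rule card_G12)
    ultimately show "card (f ` (GL c n \<times> G12 1 c)) = gpow (n - c) * catalan (c - 1)" using c by simp
  qed simp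
  also have "\<dots> = catalan (n - 1) + (\<Sum>i<n - 1. 2 ^ (n - 2 - i) * catalan i)"
  proof -
    obtain m where n: "n = Suc m" using assms by (cases n) auto
    have r: "(\<Sum>c\<in>{0 + 1..m + 1}. gpow (n - c) * catalan (c - 1)) = (\<Sum>i=0..m. gpow (n - (i + 1)) * catalan (i + 1 - 1))"
      by (rule sum.shift_bounds_cl_nat_ivl)
    have s: "{0 + 1..m + 1} = {1..n}" using n by simp
    have t: "(\<Sum>i=0..m. gpow (n - (i + 1)) * catalan (i + 1 - 1)) = (\<Sum>i=0..m. gpow (m - i) * catalan i)"
      using n by simp
    have u: "(\<Sum>i=0..m. gpow (m - i) * catalan i) = gpow (m - m) * catalan m + (\<Sum>i=0..<m. gpow (m - i) * catalan i)"
      by (rule sum.last_plus) simp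
    have v: "(\<Sum>i=0..<m. gpow (m - i) * catalan i) = (\<Sum>i<n - 1. 2 ^ (n - 2 - i) * catalan i)"
    proof -
      have "(\<Sum>i=0..<m. gpow (m - i) * catalan i) = (\<Sum>i<m. gpow (m - i) * catalan i)"
        by (simp only: atLeast0LessThan)
      also have "\<dots> = (\<Sum>i<m. 2 ^ (n - 2 - i) * catalan i)"
      proof (rule sum.cong)
        fix i assume "i \<in> {..<m}"
        then have "gpow (m - i) = 2 ^ (n - 2 - i)" using n by (simp add: gpow_def)
        then show "gpow (m - i) * catalan i = 2 ^ (n - 2 - i) * catalan i" by simp
      qed simp
      finally show ?thesis using n by simp
    qed
    have w: "gpow (m - m) * catalan m = catalan (n - 1)" using n by (simp add: gpow_def)
    show ?thesis using r t u v w unfolding s by simp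
  qed
  finally show ?thesis .
qed


end
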